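(* Let $A, C, D$ be binary random variables, with $A$ taking values $a,\overline{a}$, $C$ taking values $c,\overline{c}$, $D$ taking values $d,\overline{d}$, and let $Y$ be a real random variable with finite expectation. Suppose the joint distribution factorizes as \[ p(A,C,D,Y)=p(D)\,p(C\mid D)\,p(A\mid C)\,p(Y\mid A,C) \] (i.e. $D$ causes $C$, $C$ is a common cause of $A$ and $Y$, and $A$ causes $Y$). Assume that $C$ and $D$ are dependent, and that every event $\{A=x, C=y, D=z\}$ has positive probability. If $E[Y\mid A,D]$ is monotone in $D$, then $E[Y\mid A,C]$ is monotone in $C$.
   Context: $E[Y\mid A,D]$ is called nondecreasing in $D$ if $E[Y\mid a,d]\ge E[Y\mid a,\overline{d}]$ and $E[Y\mid \overline{a},d]\ge E[Y\mid \overline{a},\overline{d}]$; nonincreasing in $D$ if both inequalities are reversed; monotone in $D$ if it is nondecreasing or nonincreasing. The same definitions apply with $C$ in place of $D$. *)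

theory Defs
  imports "HOL-Probability.Probability"
begin

definition ev :: "'w measure \<Rightarrow> ('w \<Rightarrow> bool) \<Rightarrow> 'w set" where
  "ev M P = {w \<in> space M. P w}"

definition cexp :: "'w measure \<Rightarrow> ('w \<Rightarrow> real) \<Rightarrow> ('w \<Rightarrow> bool) \<Rightarrow> real" where
  "cexp M Y P = (\<integral>w. indicator (ev M P) w * Y w \<partial>M) / measure M (ev M P)"

text \<open>For f x z = E[Y | A = x, Z = z], with True encoding a (resp. d), False encoding
  a-bar (resp. d-bar): monotonicity in the second argument, as in the paper.\<close>
definition nondecr_in2 :: "(bool \<Rightarrow> bool \<Rightarrow> real) \<Rightarrow> bool" where
  "nondecr_in2 f \<longleftrightarrow> f True True \<ge> f True False \<and> f False True \<ge> f False False"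

definition nonincr_in2 :: "(bool \<Rightarrow> bool \<Rightarrow> real) \<Rightarrow> bool" where
  "nonincr_in2 f \<longleftrightarrow> f True True \<le> f True False \<and> f False True \<le> f False False"

definition monotone_in2 :: "(bool \<Rightarrow> bool \<Rightarrow> real) \<Rightarrow> bool" where
  "monotone_in2 f \<longleftrightarrow> nondecr_in2 f \<or> nonincr_in2 f"

end

theory Submission
  imports Defs
begin

lemma dist_int:
  assumes P: "prob_space M" and Y: "Y \<in> borel_measurable M" and E: "E1 \<in> sets M" "E2 \<in> sets M"
    and k: "k1 \<ge> 0" "k2 \<ge> 0"
    and h: "\<And>B. B \<in> sets borel \<Longrightarrow> measure M (Y -` B \<inter> E1) * k1 = measure M (Y -` B \<inter> E2) * k2"
  shows "(\<integral>w. indicator E1 w * Y w \<partial>M) * k1 = (\<integral>w. indicator E2 w * Y w \<partial>M) * k2"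
proof -
  interpret prob_space M by fact
  have em: "emeasure (distr (density M (\<lambda>w. ennreal (k * indicator E w))) borel Y) B
     = ennreal (measure M (Y -` B \<inter> E) * k)" if "B \<in> sets borel" "E \<in> sets M" "k \<ge> 0" for B E k
  proof -
    have s: "Y -` B \<inter> space M \<in> sets M" using Y that by measurable
    have "emeasure (distr (density M (\<lambda>w. ennreal (k * indicator E w))) borel Y) B
        = emeasure (density M (\<lambda>w. ennreal (k * indicator E w))) (Y -` B \<inter> space M)"
      using that Y by (subst emeasure_distr) auto
    also have "\<dots> = (\<integral>\<^sup>+w\<in>(Y -` B \<inter> space M). ennreal (k * indicator E w) \<partial>M)"
      using s that by (subst emeasure_density) auto
    also have "\<dots> = (\<integral>\<^sup>+w. ennreal k * indicator (Y -` B \<inter> E) w \<partial>M)"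
      using sets.sets_into_space[OF that(2)]
      by (intro nn_integral_cong) (auto simp: indicator_def)
    also have "\<dots> = ennreal k * emeasure M (Y -` B \<inter> E)"
    proof -
      have "Y -` B \<inter> E = (Y -` B \<inter> space M) \<inter> E"
        using sets.sets_into_space[OF that(2)] by blast
      then have "Y -` B \<inter> E \<in> sets M" using s that by simp
      then show ?thesis by (rule nn_integral_cmult_indicator)
    qed
    also have "\<dots> = ennreal (measure M (Y -` B \<inter> E) * k)"
      using that(3) by (simp add: emeasure_eq_measure ennreal_mult mult.commute)
    finally show ?thesis .
  qed
  have eq: "distr (density M (\<lambda>w. ennreal (k1 * indicator E1 w))) borel Y
      = distr (density M (\<lambda>w. ennreal (k2 * indicator E2 w))) borel Y"
    by (rule measure_eqI) (auto simp: em E k h)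
  have int: "(\<integral>w. indicator E w * Y w \<partial>M) * k
     = (\<integral>y. y \<partial>distr (density M (\<lambda>w. ennreal (k * indicator E w))) borel Y)"
    if "E \<in> sets M" "k \<ge> 0" for E k
  proof -
    have "(\<integral>y. y \<partial>distr (density M (\<lambda>w. ennreal (k * indicator E w))) borel Y)
       = (\<integral>w. Y w \<partial>density M (\<lambda>w. ennreal (k * indicator E w)))"
      using Y by (subst integral_distr) auto
    also have "\<dots> = (\<integral>w. (k * indicator E w) *\<^sub>R Y w \<partial>M)"
      using Y that by (subst integral_density) auto
    also have "\<dots> = (\<integral>w. k * (indicator E w * Y w) \<partial>M)"
      by (simp add: mult.assoc)
    also have "\<dots> = k * (\<integral>w. indicator E w * Y w \<partial>M)"
      by (rule integral_mult_right_zero)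
    finally show ?thesis by simp
  qed
  show ?thesis using int[OF E(1) k(1)] int[OF E(2) k(2)] eq by simp
qed

lemma ev_sets:
  assumes "A \<in> M \<rightarrow>\<^sub>M count_space UNIV" "C \<in> M \<rightarrow>\<^sub>M count_space UNIV" "D \<in> M \<rightarrow>\<^sub>M count_space UNIV"
  shows "ev M (\<lambda>w. A w = x \<and> C w = y \<and> D w = z) \<in> sets M"
    "ev M (\<lambda>w. A w = x \<and> C w = y) \<in> sets M"
    "ev M (\<lambda>w. A w = x \<and> D w = z) \<in> sets M"
    "ev M (\<lambda>w. C w = y \<and> D w = z) \<in> sets M"
    "ev M (\<lambda>w. C w = y) \<in> sets M"
    "ev M (\<lambda>w. D w = z) \<in> sets M"
  unfolding ev_def using assms by measurable

lemma meas_add: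
  assumes "prob_space M" "ev M Q \<in> sets M" "ev M R \<in> sets M"
    "\<And>w. P w \<longleftrightarrow> Q w \<or> R w" "\<And>w. \<not> (Q w \<and> R w)"
  shows "measure M (ev M P) = measure M (ev M Q) + measure M (ev M R)"
proof -
  interpret prob_space M by fact
  have "ev M P = ev M Q \<union> ev M R" using assms(4) by (auto simp: ev_def)
  moreover have "ev M Q \<inter> ev M R = {}" using assms(5) by (auto simp: ev_def)
  ultimately show ?thesis using assms(2,3) by (simp add: finite_measure_Union)
qed

lemma int_add:
  fixes Y :: "'w \<Rightarrow> real"
  assumes "prob_space M" "integrable M Y" "ev M Q \<in> sets M" "ev M R \<in> sets M"
    "\<And>w. P w \<longleftrightarrow> Q w \<or> R w" "\<And>w. \<not> (Q w \<and> R w)"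
  shows "(\<integral>w. indicator (ev M P) w * Y w \<partial>M)
      = (\<integral>w. indicator (ev M Q) w * Y w \<partial>M) + (\<integral>w. indicator (ev M R) w * Y w \<partial>M)"
proof -
  have "(\<integral>w. indicator (ev M P) w * Y w \<partial>M)
      = (\<integral>w. indicator (ev M Q) w * Y w + indicator (ev M R) w * Y w \<partial>M)"
    using assms(5,6) by (intro Bochner_Integration.integral_cong) (auto simp: ev_def split: split_indicator)
  also have "\<dots> = (\<integral>w. indicator (ev M Q) w * Y w \<partial>M) + (\<integral>w. indicator (ev M R) w * Y w \<partial>M)"
    using assms(2,3,4) integrable_mult_indicator[of "ev M Q" M Y] integrable_mult_indicator[of "ev M R" M Y] by (intro Bochner_Integration.integral_add) auto
  finally show ?thesis .
qed

lemma alg1: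
  fixes a b c e tt tf ft ff :: real
  assumes "a > 0" "b > 0" "c > 0" "e > 0"
    "tt * (a+b) = (tt+tf) * a" "tf * (a+b) = (tt+tf) * b"
    "ft * (c+e) = (ft+ff) * c" "ff * (c+e) = (ft+ff) * e"
  shows "(tt+ft)/(a+c) - (tf+ff)/(b+e) = ((tt+tf)/(a+b) - (ft+ff)/(c+e)) * ((a*e-b*c)/((a+c)*(b+e)))"
proof -
  define g1 where "g1 = (tt+tf)/(a+b)"
  define g0 where "g0 = (ft+ff)/(c+e)"
  have 1: "tt = g1 * a" "tf = g1 * b" using assms unfolding g1_def by (auto simp: field_simps)
  have 2: "ft = g0 * c" "ff = g0 * e" using assms unfolding g0_def by (auto simp: field_simps)
  show ?thesis unfolding g1_def[symmetric] g0_def[symmetric] unfolding 1 2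
    using assms by (simp add: field_simps)
qed

lemma fin:
  fixes hT hF gT gF s :: "bool \<Rightarrow> real"
  assumes "\<And>x. hT x - hF x = (gT x - gF x) * s x" "(\<forall>x. s x > 0) \<or> (\<forall>x. s x < 0)"
    "(\<forall>x. hT x \<ge> hF x) \<or> (\<forall>x. hT x \<le> hF x)"
  shows "(\<forall>x. gT x \<ge> gF x) \<or> (\<forall>x. gT x \<le> gF x)"
proof -
  have k: "(hT x - hF x \<ge> 0 \<longleftrightarrow> gT x - gF x \<ge> 0) \<and> (hT x - hF x \<le> 0 \<longleftrightarrow> gT x - gF x \<le> 0)"
    if "s x > 0" for x
    using that unfolding assms(1) by (auto simp: zero_le_mult_iff mult_le_0_iff)
  have k2: "(hT x - hF x \<ge> 0 \<longleftrightarrow> gT x - gF x \<le> 0) \<and> (hT x - hF x \<le> 0 \<longleftrightarrow> gT x - gF x \<ge> 0)"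
    if "s x < 0" for x
    using that unfolding assms(1) by (auto simp: zero_le_mult_iff mult_le_0_iff)
  show ?thesis using assms(2,3) k k2
    by (smt (verit))
qed

theorem theorem6:
  fixes M :: "'w measure" and A C D :: "'w \<Rightarrow> bool" and Y :: "'w \<Rightarrow> real"
  assumes "prob_space M"
    and "A \<in> M \<rightarrow>\<^sub>M count_space UNIV"
    and "C \<in> M \<rightarrow>\<^sub>M count_space UNIV"
    and "D \<in> M \<rightarrow>\<^sub>M count_space UNIV"
    and "Y \<in> borel_measurable M"
    and "integrable M Y"
    \<comment> \<open>factorization p(A,C,D,Y) = p(D) p(C|D) p(A|C) p(Y|A,C):\<close>
    and fact_A: "\<forall>x y z.
       measure M (ev M (\<lambda>w. A w = x \<and> C w = y \<and> D w = z)) * measure M (ev M (\<lambda>w. C w = y))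
     = measure M (ev M (\<lambda>w. A w = x \<and> C w = y)) * measure M (ev M (\<lambda>w. C w = y \<and> D w = z))"
    and fact_Y: "\<forall>B \<in> sets borel. \<forall>x y z.
       measure M (ev M (\<lambda>w. Y w \<in> B \<and> A w = x \<and> C w = y \<and> D w = z))
         * measure M (ev M (\<lambda>w. A w = x \<and> C w = y))
     = measure M (ev M (\<lambda>w. Y w \<in> B \<and> A w = x \<and> C w = y))
         * measure M (ev M (\<lambda>w. A w = x \<and> C w = y \<and> D w = z))"
    and dependent: "\<not> (\<forall>y z. measure M (ev M (\<lambda>w. C w = y \<and> D w = z))
                        = measure M (ev M (\<lambda>w. C w = y)) * measure M (ev M (\<lambda>w. D w = z)))"
    and positive: "\<forall>x y z. measure M (ev M (\<lambda>w. A w = x \<and> C w = y \<and> D w = z)) > 0"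
    and mono_D: "monotone_in2 (\<lambda>x z. cexp M Y (\<lambda>w. A w = x \<and> D w = z))"
  shows "monotone_in2 (\<lambda>x y. cexp M Y (\<lambda>w. A w = x \<and> C w = y))"
proof -
  interpret prob_space M by fact
  note S = ev_sets[OF assms(2-4)]
  define P3 where "P3 = (\<lambda>x y z. measure M (ev M (\<lambda>w. A w = x \<and> C w = y \<and> D w = z)))"
  define I3 where "I3 = (\<lambda>x y z. (\<integral>w. indicator (ev M (\<lambda>w. A w = x \<and> C w = y \<and> D w = z)) w * Y w \<partial>M))"
  define PAC where "PAC = (\<lambda>x y. measure M (ev M (\<lambda>w. A w = x \<and> C w = y)))"
  define IAC where "IAC = (\<lambda>x y. (\<integral>w. indicator (ev M (\<lambda>w. A w = x \<and> C w = y)) w * Y w \<partial>M))"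
  define PAD where "PAD = (\<lambda>x z. measure M (ev M (\<lambda>w. A w = x \<and> D w = z)))"
  define IAD where "IAD = (\<lambda>x z. (\<integral>w. indicator (ev M (\<lambda>w. A w = x \<and> D w = z)) w * Y w \<partial>M))"
  define PCD where "PCD = (\<lambda>y z. measure M (ev M (\<lambda>w. C w = y \<and> D w = z)))"
  define PC where "PC = (\<lambda>y. measure M (ev M (\<lambda>w. C w = y)))"
  define PD where "PD = (\<lambda>z. measure M (ev M (\<lambda>w. D w = z)))"
  have pos: "P3 x y z > 0" for x y z using positive unfolding P3_def by auto
  have hPAC: "PAC x y = P3 x y True + P3 x y False" for x y
    unfolding PAC_def P3_def by (rule meas_add, rule assms(1), rule S, rule S) auto
  have hPAD: "PAD x z = P3 x True z + P3 x False z" for x z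
    unfolding PAD_def P3_def by (rule meas_add, rule assms(1), rule S, rule S) auto
  have hPCD: "PCD y z = P3 True y z + P3 False y z" for y z
    unfolding PCD_def P3_def by (rule meas_add, rule assms(1), rule S, rule S) auto
  have hPC: "PC y = PCD y True + PCD y False" for y
    unfolding PC_def PCD_def by (rule meas_add, rule assms(1), rule S, rule S) auto
  have hPD: "PD z = PCD True z + PCD False z" for z
    unfolding PD_def PCD_def by (rule meas_add, rule assms(1), rule S, rule S) auto
  have one: "PC True + PC False = 1"
  proof -
    have "measure M (ev M (\<lambda>w. True)) = PC True + PC False"
      unfolding PC_def by (rule meas_add, rule assms(1), rule S, rule S) auto
    moreover have "ev M (\<lambda>w. True) = space M" by (simp add: ev_def)
    ultimately show ?thesis by (simp add: prob_space)
  qed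
  have hIAC: "IAC x y = I3 x y True + I3 x y False" for x y
    unfolding IAC_def I3_def by (rule int_add, rule assms(1), rule assms(6), rule S, rule S) auto
  have hIAD: "IAD x z = I3 x True z + I3 x False z" for x z
    unfolding IAD_def I3_def by (rule int_add, rule assms(1), rule assms(6), rule S, rule S) auto
  have fY: "I3 x y z * PAC x y = IAC x y * P3 x y z" for x y z
    unfolding I3_def IAC_def PAC_def P3_def
  proof (rule dist_int[OF assms(1,5) S(1) S(2)])
    fix B :: "real set" assume B: "B \<in> sets borel"
    have "Y -` B \<inter> ev M (\<lambda>w. A w = x \<and> C w = y \<and> D w = z) = ev M (\<lambda>w. Y w \<in> B \<and> A w = x \<and> C w = y \<and> D w = z)"
      "Y -` B \<inter> ev M (\<lambda>w. A w = x \<and> C w = y) = ev M (\<lambda>w. Y w \<in> B \<and> A w = x \<and> C w = y)"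
      by (auto simp: ev_def)
    then show "measure M (Y -` B \<inter> ev M (\<lambda>w. A w = x \<and> C w = y \<and> D w = z)) * measure M (ev M (\<lambda>w. A w = x \<and> C w = y))
      = measure M (Y -` B \<inter> ev M (\<lambda>w. A w = x \<and> C w = y)) * measure M (ev M (\<lambda>w. A w = x \<and> C w = y \<and> D w = z))"
      using fact_Y B by simp
  qed auto
  have fA: "P3 x y z * PC y = PAC x y * PCD y z" for x y z
    using fact_A unfolding P3_def PC_def PAC_def PCD_def by blast
  define \<Delta> where "\<Delta> = PCD True True * PCD False False - PCD True False * PCD False True"
  have "\<Delta> \<noteq> 0"
  proof
    assume d0: "\<Delta> = 0"
    have s1: "PCD True True + PCD True False + PCD False True + PCD False False = 1"
      using one hPC by simp
    have "PCD y z = PC y * PD z" for y z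
    proof -
      have "PCD y z * (PCD True True + PCD True False + PCD False True + PCD False False) = PC y * PD z"
        using d0 unfolding hPC hPD \<Delta>_def by (cases y; cases z) (simp_all, algebra+)
      then show ?thesis using s1 by simp
    qed
    then show False using dependent unfolding PCD_def PC_def PD_def by blast
  qed
  define s where "s = (\<lambda>x. (P3 x True True * P3 x False False - P3 x True False * P3 x False True)
     / ((P3 x True True + P3 x False True) * (P3 x True False + P3 x False False)))"
  have key: "IAD x True / PAD x True - IAD x False / PAD x False
     = (IAC x True / PAC x True - IAC x False / PAC x False) * s x" for x
    unfolding hIAD hPAD hIAC hPAC s_def
    by (rule alg1) (use pos fY[of x True] fY[of x False] in \<open>auto simp: hIAC hPAC\<close>)
  have PCpos: "PC y > 0" for y using pos[of True y True] pos[of False y True] pos[of True y False] pos[of False y False]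
    unfolding hPC hPCD by simp
  have PACpos: "PAC x y > 0" for x y using pos[of x y True] pos[of x y False] unfolding hPAC by simp
  have num: "(P3 x True True * P3 x False False - P3 x True False * P3 x False True) * (PC True * PC False)
     = (PAC x True * PAC x False) * \<Delta>" for x
  proof -
    have "(P3 x True True * P3 x False False - P3 x True False * P3 x False True) * (PC True * PC False)
      = (P3 x True True * PC True) * (P3 x False False * PC False) - (P3 x True False * PC True) * (P3 x False True * PC False)"
      by (simp add: algebra_simps)
    also have "\<dots> = (PAC x True * PAC x False) * \<Delta>" unfolding fA \<Delta>_def by (simp add: algebra_simps)
    finally show ?thesis .
  qed
  have ssign: "(\<forall>x. s x > 0) \<or> (\<forall>x. s x < 0)"
  proof -
    have den: "(P3 x True True + P3 x False True) * (P3 x True False + P3 x False False) > 0" for x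
      using pos by (simp add: add_pos_pos)
    have pp: "PC True * PC False > 0" "PAC x True * PAC x False > 0" for x using PCpos PACpos by simp_all
    have "s x > 0" if "\<Delta> > 0" for x
    proof -
      have "(P3 x True True * P3 x False False - P3 x True False * P3 x False True) * (PC True * PC False) > 0"
        unfolding num using that pp by simp
      then have "P3 x True True * P3 x False False - P3 x True False * P3 x False True > 0"
        using pp by (simp add: zero_less_mult_iff)
      then show ?thesis unfolding s_def using den by simp
    qed
    moreover have "s x < 0" if "\<Delta> < 0" for x
    proof -
      have "(P3 x True True * P3 x False False - P3 x True False * P3 x False True) * (PC True * PC False) < 0"
        unfolding num using that pp by (simp add: mult_pos_neg)
      then have "P3 x True True * P3 x False False - P3 x True False * P3 x False True < 0"
        using pp(1) mult_nonneg_nonneg[of "P3 x True True * P3 x False False - P3 x True False * P3 x False True" "PC True * PC False"]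
        by linarith
      then show ?thesis unfolding s_def using den by (simp add: divide_neg_pos)
    qed
    ultimately show ?thesis using \<open>\<Delta> \<noteq> 0\<close> by (meson linorder_neqE_linordered_idom)
  qed
  have ce1: "cexp M Y (\<lambda>w. A w = x \<and> C w = y) = IAC x y / PAC x y" for x y
    unfolding cexp_def IAC_def PAC_def by simp
  have ce2: "cexp M Y (\<lambda>w. A w = x \<and> D w = z) = IAD x z / PAD x z" for x z
    unfolding cexp_def IAD_def PAD_def by simp
  have hm: "(\<forall>x. IAD x True / PAD x True \<ge> IAD x False / PAD x False) \<or> (\<forall>x. IAD x True / PAD x True \<le> IAD x False / PAD x False)"
    using mono_D unfolding monotone_in2_def nondecr_in2_def nonincr_in2_def ce2
    by (metis (full_types))
  have "(\<forall>x. IAC x True / PAC x True \<ge> IAC x False / PAC x False) \<or> (\<forall>x. IAC x True / PAC x True \<le> IAC x False / PAC x False)"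
    by (rule fin[OF key ssign hm])
  then show ?thesis unfolding monotone_in2_def nondecr_in2_def nonincr_in2_def ce1 by blast
qed

end
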